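(* Let $k,n$ be integers with $n\geq 2$ and $k\geq 3$, and let $c$ be an exact $k$-coloring of $\mathcal{B}_n$. Then $\mathcal{B}_n$ contains no rainbow induced copy of $\mathcal{C}_3$ if and only if $c(\emptyset)=c([n])$ and, for any two sets $X,Y$ with $\emptyset\subsetneq X,Y\subsetneq[n]$ such that $c(X),c(Y),c(\emptyset)$ are pairwise distinct, $X$ and $Y$ are incomparable.
   Context: $\mathcal{B}_n$ denotes the Boolean lattice of all subsets of $[n]$ ordered by inclusion. An exact $k$-coloring of $\mathcal{B}_n$ is a map from $\mathcal{B}_n$ to $[k]$ that is surjective. A rainbow induced copy of $\mathcal{C}_3$ is a chain $X\subsetneq Y\subsetneq Z$ in $\mathcal{B}_n$ with $c(X),c(Y),c(Z)$ pairwise distinct. *)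

theory Defs
  imports Main
begin

definition boolean_lattice :: "nat \<Rightarrow> nat set set" where
  "boolean_lattice n = Pow {1..n}"

definition exact_coloring :: "nat \<Rightarrow> nat \<Rightarrow> (nat set \<Rightarrow> nat) \<Rightarrow> bool" where
  "exact_coloring n k c \<longleftrightarrow> c ` boolean_lattice n = {1..k}"

definition has_rainbow_C3 :: "nat \<Rightarrow> (nat set \<Rightarrow> nat) \<Rightarrow> bool" where
  "has_rainbow_C3 n c \<longleftrightarrow>
     (\<exists>X Y Z. X \<in> boolean_lattice n \<and> Y \<in> boolean_lattice n \<and> Z \<in> boolean_lattice n \<and>
        X \<subset> Y \<and> Y \<subset> Z \<and> c X \<noteq> c Y \<and> c Y \<noteq> c Z \<and> c X \<noteq> c Z)"

end

theory Submission
  imports Defs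
begin

theorem theorem2p1:
  fixes n k :: nat and c :: "nat set \<Rightarrow> nat"
  assumes "n \<ge> 2" and "k \<ge> 3" and "exact_coloring n k c"
  shows "\<not> has_rainbow_C3 n c \<longleftrightarrow>
    (c {} = c {1..n} \<and>
     (\<forall>X Y. X \<in> boolean_lattice n \<and> Y \<in> boolean_lattice n \<and>
        {} \<subset> X \<and> X \<subset> {1..n} \<and> {} \<subset> Y \<and> Y \<subset> {1..n} \<and>
        c X \<noteq> c Y \<and> c X \<noteq> c {} \<and> c Y \<noteq> c {}
        \<longrightarrow> \<not> X \<subseteq> Y \<and> \<not> Y \<subseteq> X))"
proof
  assume nr: "\<not> has_rainbow_C3 n c"
  have E: "{} \<in> boolean_lattice n" and F: "{1..n} \<in> boolean_lattice n"
    by (auto simp: boolean_lattice_def)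
  have cEF: "c {} = c {1..n}"
  proof (rule ccontr)
    assume ne: "c {} \<noteq> c {1..n}"
    have "\<exists>a\<in>{1..k}. a \<noteq> c {} \<and> a \<noteq> c {1..n}"
    proof (rule ccontr)
      assume "\<not> ?thesis"
      then have "{1..k} \<subseteq> {c {}, c {1..n}}" by auto
      then have "card {1..k} \<le> card {c {}, c {1..n}}" by (intro card_mono) auto
      also have "\<dots> \<le> 2" by (simp add: card_insert_le_m1)
      finally show False using assms(2) by simp
    qed
    then obtain W where W: "W \<in> boolean_lattice n" "c W \<noteq> c {}" "c W \<noteq> c {1..n}"
      using assms(3) unfolding exact_coloring_def by (metis imageE)
    have "W \<noteq> {}" "W \<noteq> {1..n}" "W \<subseteq> {1..n}" using W by (auto simp: boolean_lattice_def)
    then have "has_rainbow_C3 n c" unfolding has_rainbow_C3_def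
      using E F W ne by (intro exI[of _ "{}"] exI[of _ W] exI[of _ "{1..n}"]) auto
    then show False using nr by simp
  qed
  show "c {} = c {1..n} \<and>
     (\<forall>X Y. X \<in> boolean_lattice n \<and> Y \<in> boolean_lattice n \<and>
        {} \<subset> X \<and> X \<subset> {1..n} \<and> {} \<subset> Y \<and> Y \<subset> {1..n} \<and>
        c X \<noteq> c Y \<and> c X \<noteq> c {} \<and> c Y \<noteq> c {}
        \<longrightarrow> \<not> X \<subseteq> Y \<and> \<not> Y \<subseteq> X)"
  proof (rule conjI[OF cEF], intro allI impI)
    fix X Y assume h: "X \<in> boolean_lattice n \<and> Y \<in> boolean_lattice n \<and>
        {} \<subset> X \<and> X \<subset> {1..n} \<and> {} \<subset> Y \<and> Y \<subset> {1..n} \<and>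
        c X \<noteq> c Y \<and> c X \<noteq> c {} \<and> c Y \<noteq> c {}"
    show "\<not> X \<subseteq> Y \<and> \<not> Y \<subseteq> X"
    proof (intro conjI notI)
      assume "X \<subseteq> Y"
      then have "has_rainbow_C3 n c" unfolding has_rainbow_C3_def
        using E h by (intro exI[of _ "{}"] exI[of _ X] exI[of _ Y]) auto
      then show False using nr by simp
    next
      assume "Y \<subseteq> X"
      then have "has_rainbow_C3 n c" unfolding has_rainbow_C3_def
        using E h by (intro exI[of _ "{}"] exI[of _ Y] exI[of _ X]) auto
      then show False using nr by simp
    qed
  qed
next
  assume R: "c {} = c {1..n} \<and>
     (\<forall>X Y. X \<in> boolean_lattice n \<and> Y \<in> boolean_lattice n \<and>
        {} \<subset> X \<and> X \<subset> {1..n} \<and> {} \<subset> Y \<and> Y \<subset> {1..n} \<and>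
        c X \<noteq> c Y \<and> c X \<noteq> c {} \<and> c Y \<noteq> c {}
        \<longrightarrow> \<not> X \<subseteq> Y \<and> \<not> Y \<subseteq> X)"
  show "\<not> has_rainbow_C3 n c"
  proof
    assume "has_rainbow_C3 n c"
    then obtain X Y Z where h: "X \<in> boolean_lattice n" "Y \<in> boolean_lattice n"
      "Z \<in> boolean_lattice n" "X \<subset> Y" "Y \<subset> Z" "c X \<noteq> c Y" "c Y \<noteq> c Z" "c X \<noteq> c Z"
      unfolding has_rainbow_C3_def by blast
    have sub: "Z \<subseteq> {1..n}" using h(3) by (simp add: boolean_lattice_def)
    have RR: "\<And>A B. A \<in> boolean_lattice n \<Longrightarrow> B \<in> boolean_lattice n \<Longrightarrow>
            {} \<subset> A \<Longrightarrow> A \<subset> {1..n} \<Longrightarrow> {} \<subset> B \<Longrightarrow> B \<subset> {1..n} \<Longrightarrow>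
            c A \<noteq> c B \<Longrightarrow> c A \<noteq> c {} \<Longrightarrow> c B \<noteq> c {} \<Longrightarrow> A \<subseteq> B \<Longrightarrow> False"
          using R by blast
    have cF: "c {} = c {1..n}" using R by blast
    show False
    proof (cases "X = {}")
      case True
      then have "Z \<noteq> {1..n}" using cF h(8) by auto
      then have "Z \<subset> {1..n}" using sub by blast
      moreover have "{} \<subset> Y" "{} \<subset> Z" "Y \<subset> {1..n}" using h True \<open>Z \<subset> {1..n}\<close> by auto
      ultimately show ?thesis using RR[OF h(2) h(3)] h(4,5,6,7,8) True by auto
    next
      case Xne: False
      show ?thesis
      proof (cases "Z = {1..n}")
        case True
        have "{} \<subset> X" "{} \<subset> Y" "X \<subset> {1..n}" "Y \<subset> {1..n}" using h Xne True by auto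
        then show ?thesis using RR[OF h(1) h(2)] h(4,6,7,8) cF True by auto
      next
        case False
        have "Z \<subset> {1..n}" using False sub by blast
        then have Zp: "Z \<subset> {1..n}" "Y \<subset> {1..n}" "X \<subset> {1..n}" using h by auto
        have ne: "{} \<subset> X" "{} \<subset> Y" "{} \<subset> Z" using Xne h by auto
        have "X \<subseteq> Y" "Y \<subseteq> Z" "X \<subseteq> Z" using h by auto
        then have S: "X \<subseteq> Y" "Y \<subseteq> Z" "X \<subseteq> Z" .
        show ?thesis
        proof (cases "c X = c {}")
          case True
          then show ?thesis using RR[OF h(2) h(3) ne(2) Zp(2) ne(3) Zp(1) h(7)] S h by simp
        next
          case cX: False
          show ?thesis
          proof (cases "c Y = c {}")
            case True
            then show ?thesis using RR[OF h(1) h(3) ne(1) Zp(3) ne(3) Zp(1) h(8)] S h cX by simp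
          next
            case False
            then show ?thesis using RR[OF h(1) h(2) ne(1) Zp(3) ne(2) Zp(2) h(6)] S h cX by simp
          qed
        qed
      qed
    qed
  qed
qed

end
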